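(* Let $(G,+)$ be a group. Let $ICE(G)$ be the set of image-commuting pairs $(\varepsilon,\eta)$ of endomorphisms of $(G,+)$, and let $INR(G)$ be the set of interchange near rings $(G,+,\bullet)$ whose underlying group is $(G,+)$ (i.e. the set of binary operations $\bullet$ on $G$ satisfying the interchange law). Then the map $\Psi: ICE(G)\to INR(G)$, $\Psi(\varepsilon,\eta) = (G,+,\bullet_{(\varepsilon,\eta)})$ where $x\bullet_{(\varepsilon,\eta)} y = \varepsilon(x)+\eta(y)$, is a bijection.
   Context: An interchange near ring is a triple $(G,+,\bullet)$ where $(G,+)$ is a group (written additively, not necessarily abelian) and $\bullet$ is a binary operation on $G$ satisfying the interchange law $(w+x)\bullet(y+z) = (w\bullet y)+(x\bullet z)$ for all $w,x,y,z\in G$. A pair $(\varepsilon,\eta)$ of endomorphisms of $(G,+)$ is image-commuting if $\varepsilon(x)+\eta(y) = \eta(y)+\varepsilon(x)$ for all $x,y\in G$. *)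

theory Defs
  imports Main
begin

definition endo :: "('a::group_add \<Rightarrow> 'a) \<Rightarrow> bool" where
  "endo f \<longleftrightarrow> (\<forall>x y. f (x + y) = f x + f y)"

definition image_commuting :: "('a::group_add \<Rightarrow> 'a) \<Rightarrow> ('a \<Rightarrow> 'a) \<Rightarrow> bool" where
  "image_commuting e h \<longleftrightarrow> (\<forall>x y. e x + h y = h y + e x)"

definition ICE :: "(('a::group_add \<Rightarrow> 'a) \<times> ('a \<Rightarrow> 'a)) set" where
  "ICE = {(e, h). endo e \<and> endo h \<and> image_commuting e h}"

definition interchange :: "('a::group_add \<Rightarrow> 'a \<Rightarrow> 'a) \<Rightarrow> bool" where
  "interchange m \<longleftrightarrow> (\<forall>w x y z. m (w + x) (y + z) = m w y + m x z)"

text \<open>INR(G): interchange near rings with underlying group (G,+), identified with their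
multiplication.\<close>
definition INR :: "('a::group_add \<Rightarrow> 'a \<Rightarrow> 'a) set" where
  "INR = {m. interchange m}"

definition Psi :: "('a::group_add \<Rightarrow> 'a) \<times> ('a \<Rightarrow> 'a) \<Rightarrow> ('a \<Rightarrow> 'a \<Rightarrow> 'a)" where
  "Psi p = (\<lambda>x y. fst p x + snd p y)"

end

theory Submission
  imports Defs
begin

lemma endo_zero: "endo f \<Longrightarrow> f 0 = (0::'a::group_add)"
  unfolding endo_def proof -
  assume "\<forall>x y. f (x + y) = f x + f y"
  then have "f (0 + 0) = f 0 + f 0" by blast
  then have "f 0 + f 0 = f 0 + 0" by simp
  then show "f 0 = 0" by (rule add_left_imp_eq)
qed

theorem theorem3p4:
  shows "bij_betw (Psi :: ('a::group_add \<Rightarrow> 'a) \<times> ('a \<Rightarrow> 'a) \<Rightarrow> _) ICE INR"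
proof (rule bij_betwI')
  fix p q :: "('a \<Rightarrow> 'a) \<times> ('a \<Rightarrow> 'a)"
  assume p: "p \<in> ICE" and q: "q \<in> ICE"
  show "(Psi p = Psi q) = (p = q)"
  proof
    assume eq: "Psi p = Psi q"
    have z: "fst p 0 = 0" "snd p 0 = 0" "fst q 0 = 0" "snd q 0 = 0"
      using p q endo_zero unfolding ICE_def by auto
    have "fst p x = fst q x" for x using fun_cong[OF fun_cong[OF eq, of x], of 0] z
      by (simp add: Psi_def)
    moreover have "snd p x = snd q x" for x using fun_cong[OF fun_cong[OF eq, of 0], of x] z
      by (simp add: Psi_def)
    ultimately show "p = q" by (simp add: prod_eq_iff fun_eq_iff)
  qed simp
next
  fix p :: "('a \<Rightarrow> 'a) \<times> ('a \<Rightarrow> 'a)"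
  assume "p \<in> ICE"
  then obtain e h where p: "p = (e, h)" "endo e" "endo h" "image_commuting e h"
    unfolding ICE_def by auto
  have "e (w + x) + h (y + z) = (e w + h y) + (e x + h z)" for w x y z
  proof -
    have "e (w + x) + h (y + z) = e w + (e x + h y) + h z"
      using p unfolding endo_def by (simp add: add.assoc)
    also have "\<dots> = e w + (h y + e x) + h z"
      using p(4) unfolding image_commuting_def by (metis (no_types))
    finally show ?thesis by (simp add: add.assoc)
  qed
  then show "Psi p \<in> INR" using p by (simp add: INR_def interchange_def Psi_def)
next
  fix m :: "'a \<Rightarrow> 'a \<Rightarrow> 'a"
  assume "m \<in> INR"
  then have I: "\<And>w x y z. m (w + x) (y + z) = m w y + m x z"
    by (simp add: INR_def interchange_def)
  have mxy: "m x y = m x 0 + m 0 y" for x y using I[of x 0 0 y] by simp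
  have e: "endo (\<lambda>x. m x 0)" unfolding endo_def proof (intro allI)
    fix x y show "m (x + y) 0 = m x 0 + m y 0" using I[of x y 0 0] by simp
  qed
  have h: "endo (\<lambda>y. m 0 y)" unfolding endo_def proof (intro allI)
    fix x y show "m 0 (x + y) = m 0 x + m 0 y" using I[of 0 0 x y] by simp
  qed
  have c: "image_commuting (\<lambda>x. m x 0) (\<lambda>y. m 0 y)"
    unfolding image_commuting_def proof (intro allI)
    fix x y have "m x y = m 0 y + m x 0" using I[of 0 x y 0] by simp
    then show "m x 0 + m 0 y = m 0 y + m x 0" using mxy[of x y] by simp
  qed
  have "(\<lambda>x. m x 0, \<lambda>y. m 0 y) \<in> ICE" using e h c by (simp add: ICE_def)
  moreover have "m = Psi (\<lambda>x. m x 0, \<lambda>y. m 0 y)"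
    unfolding Psi_def fst_conv snd_conv by (intro ext) (rule mxy)
  ultimately show "\<exists>p\<in>ICE. m = Psi p" by (rule bexI[rotated])
qed

end
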